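(* Let $X$ be a finite quandle, $\Lambda$ a finite abelian group, $\phi:X\times X\to\Lambda$ a quandle $2$-cocycle with $Q=\Lambda\times_\phi X$ connected, and $\pi:Q\to X$, $(\lambda,a)\mapsto a$. Let $K$ be an oriented knot, $T$ a $1$-tangle diagram with closure $K$, top arc $b_0$, bottom arc $b_1$, and write $\Phi_\phi(K)=\sum_{\lambda\in\Lambda}n_\lambda\lambda$. Fix $x\in X$, let $e=(1,x)$, let $\mathscr{C}_0$ be the set of colorings $C$ of $T$ by $Q$ with $C(b_0)=e$ and $\pi C(b_1)=x$, and let $\mathscr{C}_1=\mathrm{Col}^e_Q(T)\setminus\mathscr{C}_0$. Then $$\Psi^e_Q(K)=\frac{1}{|X|}\sum_{\lambda\in\Lambda} n_\lambda\,(\lambda,x)+\sum_{C\in\mathscr{C}_1}C(b_1).$$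
   Context: A quandle is a set with operation $*$ satisfying $a*a=a$; unique right division; $(a*b)*c=(a*c)*(b*c)$. $R_a(y)=y*a$; connected means the group generated by the $R_a$ acts transitively. A quandle $2$-cocycle is $\phi:X\times X\to\Lambda$ ($\Lambda$ abelian, multiplicative) with $\phi(a,a)=1$ and $\phi(a,b)\phi(a*b,c)=\phi(a,c)\phi(a*c,b*c)$; $\Lambda\times_\phi X$ is $\Lambda\times X$ with $(\lambda,a)*(\mu,b)=(\lambda\phi(a,b),a*b)$. Colorings: arcs of an oriented diagram get colors so that at each crossing $\tau$ with source colors $(x_\tau,y_\tau)$ (incoming under-arc, over-arc) the outgoing under-arc gets $x_\tau*y_\tau$; $\epsilon(\tau)$ is the crossing sign; $B_\phi(K,C)=\prod_\tau\phi(x_\tau,y_\tau)^{\epsilon(\tau)}$ and $\Phi_\phi(K)=\sum_C B_\phi(K,C)\in\mathbb{Z}[\Lambda]$ over all colorings of $K$ by $X$. A $1$-tangle is a properly embedded oriented arc in a 3-ball up to isotopy rel boundary, oriented top to bottom, with closure obtained by joining endpoints with a trivial arc; end colors need not agree. $\mathrm{Col}^e_Q(T)$ is the set of colorings $C$ of $T$ by $Q$ with $C(b_0)=e$, and $\Psi^e_Q(K)=\sum_{C\in\mathrm{Col}^e_Q(T)}C(b_1)$, a formal $\mathbb{Z}$-linear combination of elements of $Q$. *)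

theory Defs
  imports Complex_Main "HOL-Library.FuncSet"
begin

text \<open>Quandles on a whole type (the carrier is UNIV).  The operation is x * y = op x y.\<close>
definition quandle :: "('a \<Rightarrow> 'a \<Rightarrow> 'a) \<Rightarrow> bool" where
  "quandle op \<longleftrightarrow> (\<forall>a. op a a = a) \<and> (\<forall>a b. \<exists>!c. op c a = b)
     \<and> (\<forall>a b c. op (op a b) c = op (op a c) (op b c))"

definition inner_step :: "('a \<Rightarrow> 'a \<Rightarrow> 'a) \<Rightarrow> ('a \<times> 'a) set" where
  "inner_step op = {(y, op y a) | y a. True} \<union> {(op y a, y) | y a. True}"

text \<open>Connected: the group generated by the R_a acts transitively, i.e. any two
  elements are related by a word in the R_a and their inverses.\<close>
definition quandle_connected :: "('a \<Rightarrow> 'a \<Rightarrow> 'a) \<Rightarrow> bool" where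
  "quandle_connected op \<longleftrightarrow> (\<forall>p q. (p, q) \<in> (inner_step op)\<^sup>*)"

definition quandle_2cocycle :: "('a \<Rightarrow> 'a \<Rightarrow> 'a) \<Rightarrow> ('a \<Rightarrow> 'a \<Rightarrow> 'l::ab_group_add) \<Rightarrow> bool" where
  "quandle_2cocycle op phi \<longleftrightarrow> (\<forall>a. phi a a = 0)
     \<and> (\<forall>a b c. phi a b + phi (op a b) c = phi a c + phi (op a c) (op b c))"

definition ext_op :: "('a \<Rightarrow> 'a \<Rightarrow> 'a) \<Rightarrow> ('a \<Rightarrow> 'a \<Rightarrow> 'l::ab_group_add)
    \<Rightarrow> ('l \<times> 'a) \<Rightarrow> ('l \<times> 'a) \<Rightarrow> ('l \<times> 'a)" where
  "ext_op op phi p q = (fst p + phi (snd p) (snd q), op (snd p) (snd q))"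

text \<open>Combinatorial oriented 1-tangle diagram with m crossings.  Travelling along the
  strand from top to bottom, the arcs are 0,1,...,m (arc 0 = top arc b0, arc m = bottom
  arc b1); the i-th crossing (1 \<le> i \<le> m) is where the strand passes under, the incoming
  under-arc is i-1, the outgoing under-arc is i, the over-arc is ov i, and sg i is
  True iff the crossing is positive.\<close>
definition tangle_diagram :: "nat \<Rightarrow> (nat \<Rightarrow> nat) \<Rightarrow> bool" where
  "tangle_diagram m ov \<longleftrightarrow> (\<forall>i\<in>{1..m}. ov i \<le> m)"

text \<open>Source under-arc colour at crossing i: at a positive crossing the incoming
  under-arc, at a negative crossing the outgoing under-arc.\<close>
definition src_col :: "(nat \<Rightarrow> bool) \<Rightarrow> (nat \<Rightarrow> 'q) \<Rightarrow> nat \<Rightarrow> 'q" where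
  "src_col sg C i = (if sg i then C (i - 1) else C i)"

definition colorings :: "('q \<Rightarrow> 'q \<Rightarrow> 'q) \<Rightarrow> nat \<Rightarrow> (nat \<Rightarrow> nat) \<Rightarrow> (nat \<Rightarrow> bool)
    \<Rightarrow> (nat \<Rightarrow> 'q) set" where
  "colorings op m ov sg = {C \<in> {0..m} \<rightarrow>\<^sub>E UNIV.
      \<forall>i\<in>{1..m}. (if sg i then C i = op (C (i - 1)) (C (ov i))
                           else C (i - 1) = op (C i) (C (ov i)))}"

text \<open>Colorings of the closure: b0 and b1 are joined into a single arc.\<close>
definition closure_colorings :: "('q \<Rightarrow> 'q \<Rightarrow> 'q) \<Rightarrow> nat \<Rightarrow> (nat \<Rightarrow> nat) \<Rightarrow> (nat \<Rightarrow> bool)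
    \<Rightarrow> (nat \<Rightarrow> 'q) set" where
  "closure_colorings op m ov sg = {C \<in> colorings op m ov sg. C 0 = C m}"

definition boltzmann :: "('a \<Rightarrow> 'a \<Rightarrow> 'l::ab_group_add) \<Rightarrow> nat \<Rightarrow> (nat \<Rightarrow> nat)
    \<Rightarrow> (nat \<Rightarrow> bool) \<Rightarrow> (nat \<Rightarrow> 'a) \<Rightarrow> 'l" where
  "boltzmann phi m ov sg C = (\<Sum>i\<in>{1..m}.
      (if sg i then phi (src_col sg C i) (C (ov i)) else - phi (src_col sg C i) (C (ov i))))"

text \<open>Formal Z-linear combination sum_{c in S} f c, as a coefficient function.\<close>
definition formal_sum :: "'c set \<Rightarrow> ('c \<Rightarrow> 'q) \<Rightarrow> 'q \<Rightarrow> int" where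
  "formal_sum S f q = int (card {c \<in> S. f c = q})"

text \<open>Cocycle invariant Phi_phi(K) = sum_C B_phi(K,C) in Z[Lambda], computed on the closure
  diagram of the tangle; coefficient n_lambda.\<close>
definition cocycle_invariant :: "('a \<Rightarrow> 'a \<Rightarrow> 'a) \<Rightarrow> ('a \<Rightarrow> 'a \<Rightarrow> 'l::ab_group_add) \<Rightarrow> nat
    \<Rightarrow> (nat \<Rightarrow> nat) \<Rightarrow> (nat \<Rightarrow> bool) \<Rightarrow> 'l \<Rightarrow> int" where
  "cocycle_invariant op phi m ov sg =
     formal_sum (closure_colorings op m ov sg) (boltzmann phi m ov sg)"

definition col_e :: "('q \<Rightarrow> 'q \<Rightarrow> 'q) \<Rightarrow> nat \<Rightarrow> (nat \<Rightarrow> nat) \<Rightarrow> (nat \<Rightarrow> bool) \<Rightarrow> 'q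
    \<Rightarrow> (nat \<Rightarrow> 'q) set" where
  "col_e op m ov sg e = {C \<in> colorings op m ov sg. C 0 = e}"

definition Psi :: "('q \<Rightarrow> 'q \<Rightarrow> 'q) \<Rightarrow> nat \<Rightarrow> (nat \<Rightarrow> nat) \<Rightarrow> (nat \<Rightarrow> bool) \<Rightarrow> 'q
    \<Rightarrow> 'q \<Rightarrow> int" where
  "Psi op m ov sg e = formal_sum (col_e op m ov sg e) (\<lambda>C. C m)"

end

theory Submission
  imports Defs
begin

definition bterm :: "('a \<Rightarrow> 'a \<Rightarrow> 'l::ab_group_add) \<Rightarrow> (nat \<Rightarrow> nat) \<Rightarrow> (nat \<Rightarrow> bool) \<Rightarrow> (nat \<Rightarrow> 'a) \<Rightarrow> nat \<Rightarrow> 'l" where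
  "bterm phi ov sg D i = (if sg i then phi (src_col sg D i) (D (ov i)) else - phi (src_col sg D i) (D (ov i)))"

lemma boltzmann_bterm: "boltzmann phi m ov sg D = sum (bterm phi ov sg D) {1..m}"
  unfolding boltzmann_def bterm_def by simp

lemma col_eq:
  assumes "C \<in> colorings op m ov sg" "i \<in> {1..m}"
  shows "if sg i then C i = op (C (i - 1)) (C (ov i)) else C (i - 1) = op (C i) (C (ov i))"
proof -
  have "\<forall>i\<in>{1..m}. if sg i then C i = op (C (i - 1)) (C (ov i)) else C (i - 1) = op (C i) (C (ov i))"
    using assms(1) unfolding colorings_def by blast
  then show ?thesis using assms(2) by blast
qed

lemma col_fst:
  assumes C: "C \<in> colorings (ext_op opX phi) m ov sg" and "k \<le> m"
  shows "fst (C k) = fst (C 0) + (\<Sum>i\<in>{1..k}. bterm phi ov sg (\<lambda>j. snd (C j)) i)"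
  using assms(2)
proof (induction k)
  case 0 show ?case by simp
next
  case (Suc k)
  have cr: "if sg (Suc k) then C (Suc k) = ext_op opX phi (C k) (C (ov (Suc k)))
     else C k = ext_op opX phi (C (Suc k)) (C (ov (Suc k)))"
  proof -
    have "Suc k \<in> {1..m}" using Suc.prems by simp
    from col_eq[OF C this] show ?thesis by (cases "sg (Suc k)") auto
  qed
  have "fst (C (Suc k)) = fst (C k) + bterm phi ov sg (\<lambda>j. snd (C j)) (Suc k)"
    using cr by (auto simp: ext_op_def bterm_def src_col_def split: if_splits)
  then show ?case using Suc by simp
qed

definition lift :: "('a \<Rightarrow> 'a \<Rightarrow> 'l::ab_group_add) \<Rightarrow> nat \<Rightarrow> (nat \<Rightarrow> nat) \<Rightarrow> (nat \<Rightarrow> bool) \<Rightarrow> (nat \<Rightarrow> 'a) \<Rightarrow> nat \<Rightarrow> 'l \<times> 'a" where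
  "lift phi m ov sg D = (\<lambda>i\<in>{0..m}. (sum (bterm phi ov sg D) {1..i}, D i))"

lemma lift_col:
  assumes T: "tangle_diagram m ov" and D: "D \<in> colorings opX m ov sg"
  shows "lift phi m ov sg D \<in> colorings (ext_op opX phi) m ov sg"
proof -
  have "\<forall>i\<in>{1..m}. (if sg i then lift phi m ov sg D i = ext_op opX phi (lift phi m ov sg D (i - 1)) (lift phi m ov sg D (ov i))
                           else lift phi m ov sg D (i - 1) = ext_op opX phi (lift phi m ov sg D i) (lift phi m ov sg D (ov i)))"
  proof
    fix i assume i: "i \<in> {1..m}"
    then obtain j where j: "i = Suc j" by (cases i) auto
    have ov: "ov i \<le> m" using T i unfolding tangle_diagram_def by auto
    have Deq: "if sg i then D i = opX (D (i - 1)) (D (ov i)) else D (i - 1) = opX (D i) (D (ov i))"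
      using col_eq[OF D i] .
    show "(if sg i then lift phi m ov sg D i = ext_op opX phi (lift phi m ov sg D (i - 1)) (lift phi m ov sg D (ov i))
                           else lift phi m ov sg D (i - 1) = ext_op opX phi (lift phi m ov sg D i) (lift phi m ov sg D (ov i)))"
      using Deq i ov unfolding j lift_def by (auto simp: ext_op_def bterm_def src_col_def)
  qed
  moreover have "lift phi m ov sg D \<in> {0..m} \<rightarrow>\<^sub>E UNIV" unfolding lift_def by simp
  ultimately show ?thesis unfolding colorings_def by blast
qed


lemma colorings_ext: "C \<in> colorings op m ov sg \<Longrightarrow> C \<in> extensional {0..m}"
  unfolding colorings_def by (auto simp: PiE_iff)

lemma finite_colorings: "finite (colorings (op :: 'q::finite \<Rightarrow> 'q \<Rightarrow> 'q) m ov sg)"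
proof -
  have "colorings op m ov sg \<subseteq> {0..m} \<rightarrow>\<^sub>E (UNIV :: 'q set)" unfolding colorings_def by auto
  moreover have "finite ({0..m} \<rightarrow>\<^sub>E (UNIV :: 'q set))" by (rule finite_PiE) auto
  ultimately show ?thesis by (rule finite_subset)
qed

lemma proj_col:
  assumes T: "tangle_diagram m ov" and C: "C \<in> colorings (ext_op opX phi) m ov sg"
  shows "(\<lambda>j\<in>{0..m}. snd (C j)) \<in> colorings opX m ov sg"
proof -
  have "\<forall>i\<in>{1..m}. (if sg i then (\<lambda>j\<in>{0..m}. snd (C j)) i = opX ((\<lambda>j\<in>{0..m}. snd (C j)) (i - 1)) ((\<lambda>j\<in>{0..m}. snd (C j)) (ov i))
         else (\<lambda>j\<in>{0..m}. snd (C j)) (i - 1) = opX ((\<lambda>j\<in>{0..m}. snd (C j)) i) ((\<lambda>j\<in>{0..m}. snd (C j)) (ov i)))"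
  proof
    fix i assume i: "i \<in> {1..m}"
    have ov: "ov i \<le> m" using T i unfolding tangle_diagram_def by auto
    show "(if sg i then (\<lambda>j\<in>{0..m}. snd (C j)) i = opX ((\<lambda>j\<in>{0..m}. snd (C j)) (i - 1)) ((\<lambda>j\<in>{0..m}. snd (C j)) (ov i))
         else (\<lambda>j\<in>{0..m}. snd (C j)) (i - 1) = opX ((\<lambda>j\<in>{0..m}. snd (C j)) i) ((\<lambda>j\<in>{0..m}. snd (C j)) (ov i)))"
      using col_eq[OF C i] i ov by (cases "sg i") (auto simp: ext_op_def)
  qed
  moreover have "(\<lambda>j\<in>{0..m}. snd (C j)) \<in> {0..m} \<rightarrow>\<^sub>E UNIV" by simp
  ultimately show ?thesis unfolding colorings_def by blast
qed

lemma lift_inv: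
  assumes T: "tangle_diagram m ov" and C: "C \<in> colorings (ext_op opX phi) m ov sg"
    and C0: "fst (C 0) = 0"
  shows "C = lift phi m ov sg (\<lambda>j\<in>{0..m}. snd (C j))"
proof
  fix i
  show "C i = lift phi m ov sg (\<lambda>j\<in>{0..m}. snd (C j)) i"
  proof (cases "i \<le> m")
    case True
    have bt: "bterm phi ov sg (\<lambda>j\<in>{0..m}. snd (C j)) k = bterm phi ov sg (\<lambda>j. snd (C j)) k"
      if "k \<in> {1..i}" for k
    proof -
      have "ov k \<le> m" using T that True unfolding tangle_diagram_def by auto
      then show ?thesis using that True by (auto simp: bterm_def src_col_def)
    qed
    have "fst (C i) = (\<Sum>k\<in>{1..i}. bterm phi ov sg (\<lambda>j. snd (C j)) k)"
      using col_fst[OF C True] C0 by simp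
    also have "\<dots> = (\<Sum>k\<in>{1..i}. bterm phi ov sg (\<lambda>j\<in>{0..m}. snd (C j)) k)"
      using bt by simp
    finally show ?thesis using True unfolding lift_def by (simp add: prod_eq_iff)
  next
    case False
    then show ?thesis using colorings_ext[OF C] unfolding lift_def by (simp add: extensional_def)
  qed
qed

lemma lift_inj: "inj_on (lift phi m ov sg) (colorings opX m ov sg)"
proof
  fix D D' assume D: "D \<in> colorings opX m ov sg" and D': "D' \<in> colorings opX m ov sg"
    and eq: "lift phi m ov sg D = lift phi m ov sg D'"
  show "D = D'"
  proof
    fix i show "D i = D' i"
    proof (cases "i \<le> m")
      case True
      have "snd (lift phi m ov sg D i) = snd (lift phi m ov sg D' i)" using eq by simp
      then show ?thesis using True unfolding lift_def by simp
    next
      case False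
      then show ?thesis using colorings_ext[OF D] colorings_ext[OF D'] by (simp add: extensional_def)
    qed
  qed
qed

definition shift :: "('a \<Rightarrow> 'a \<Rightarrow> 'a) \<Rightarrow> nat \<Rightarrow> 'a \<Rightarrow> (nat \<Rightarrow> 'a) \<Rightarrow> nat \<Rightarrow> 'a" where
  "shift op m c D = (\<lambda>i\<in>{0..m}. op (D i) c)"

lemma quandle_dist: assumes "quandle op" shows "op (op a b) c = op (op a c) (op b c)"
proof -
  have "\<forall>a b c. op (op a b) c = op (op a c) (op b c)" using assms unfolding quandle_def
    by (rule conjunct2[THEN conjunct2])
  then show ?thesis by metis
qed

lemma quandle_div: assumes "quandle op" shows "\<exists>!c. op c a = b"
proof -
  have "\<forall>a b. \<exists>!c. op c a = b" using assms unfolding quandle_def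
    by (rule conjunct2[THEN conjunct1])
  then show ?thesis by simp
qed

lemma shift_col:
  assumes Qd: "quandle opX" and T: "tangle_diagram m ov" and D: "D \<in> colorings opX m ov sg"
  shows "shift opX m c D \<in> colorings opX m ov sg"
proof -
  have dist: "\<And>a b c. opX (opX a b) c = opX (opX a c) (opX b c)" using quandle_dist[OF Qd] .
  have "\<forall>i\<in>{1..m}. (if sg i then shift opX m c D i = opX (shift opX m c D (i - 1)) (shift opX m c D (ov i))
         else shift opX m c D (i - 1) = opX (shift opX m c D i) (shift opX m c D (ov i)))"
  proof
    fix i assume i: "i \<in> {1..m}"
    have ov: "ov i \<le> m" using T i unfolding tangle_diagram_def by auto
    show "(if sg i then shift opX m c D i = opX (shift opX m c D (i - 1)) (shift opX m c D (ov i))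
         else shift opX m c D (i - 1) = opX (shift opX m c D i) (shift opX m c D (ov i)))"
    proof -
      have e1: "shift opX m c D i = opX (D i) c" "shift opX m c D (i - 1) = opX (D (i - 1)) c"
        "shift opX m c D (ov i) = opX (D (ov i)) c" using i ov by (auto simp: shift_def)
      show ?thesis
      proof (cases "sg i")
        case True
        then have eq: "D i = opX (D (i - 1)) (D (ov i))" using col_eq[OF D i] by simp
        have "opX (D i) c = opX (opX (D (i - 1)) (D (ov i))) c" using eq by (rule arg_cong)
        also have "\<dots> = opX (opX (D (i - 1)) c) (opX (D (ov i)) c)" by (rule dist)
        finally show ?thesis using True e1 by simp
      next
        case False
        then have eq: "D (i - 1) = opX (D i) (D (ov i))" using col_eq[OF D i] by simp
        have "opX (D (i - 1)) c = opX (opX (D i) (D (ov i))) c" using eq by (rule arg_cong)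
        also have "\<dots> = opX (opX (D i) c) (opX (D (ov i)) c)" by (rule dist)
        finally show ?thesis using False e1 by simp
      qed
    qed
  qed
  moreover have "shift opX m c D \<in> {0..m} \<rightarrow>\<^sub>E UNIV" unfolding shift_def by simp
  ultimately show ?thesis unfolding colorings_def by blast
qed

lemma shift_inj:
  assumes Qd: "quandle opX"
  shows "inj_on (shift opX m c) (colorings opX m ov sg)"
proof
  have uq: "\<And>a b. opX a c = opX b c \<Longrightarrow> a = b"
  proof -
    fix a b assume "opX a c = opX b c"
    moreover have "\<exists>!w. opX w c = opX a c" by (rule quandle_div[OF Qd])
    ultimately show "a = b" by (metis (no_types))
  qed
  fix D D' assume D: "D \<in> colorings opX m ov sg" and D': "D' \<in> colorings opX m ov sg"
    and eq: "shift opX m c D = shift opX m c D'"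
  show "D = D'"
  proof
    fix i show "D i = D' i"
    proof (cases "i \<le> m")
      case True
      have "shift opX m c D i = shift opX m c D' i" using eq by simp
      then have "opX (D i) c = opX (D' i) c" using True unfolding shift_def by simp
      then show ?thesis by (rule uq)
    next
      case False
      then show ?thesis using colorings_ext[OF D] colorings_ext[OF D'] by (simp add: extensional_def)
    qed
  qed
qed

lemma telescope:
  fixes g :: "nat \<Rightarrow> 'l::ab_group_add"
  shows "(\<Sum>i\<in>{1..k}. g i - g (i - 1)) = g k - g 0"
  by (induction k) auto

lemma shift_boltz:
  assumes Qd: "quandle opX" and cc: "quandle_2cocycle opX phi" and T: "tangle_diagram m ov"
    and D: "D \<in> colorings opX m ov sg" and Dc: "D 0 = D m"
  shows "boltzmann phi m ov sg (shift opX m c D) = boltzmann phi m ov sg D"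
proof -
  have cy: "\<And>a b. phi (opX a c) (opX b c) = phi a b + phi (opX a b) c - phi a c"
    using cc unfolding quandle_2cocycle_def by (metis add_diff_cancel_left')
  have bteq: "bterm phi ov sg (shift opX m c D) i = bterm phi ov sg D i + (phi (D i) c - phi (D (i - 1)) c)"
    if i: "i \<in> {1..m}" for i
  proof -
    have ov: "ov i \<le> m" using T i unfolding tangle_diagram_def by auto
    have e1: "shift opX m c D i = opX (D i) c" "shift opX m c D (i - 1) = opX (D (i - 1)) c"
        "shift opX m c D (ov i) = opX (D (ov i)) c" using i ov by (auto simp: shift_def)
    show ?thesis
    proof (cases "sg i")
      case True
      then have eq: "D i = opX (D (i - 1)) (D (ov i))" using col_eq[OF D i] by simp
      have "bterm phi ov sg (shift opX m c D) i = phi (opX (D (i - 1)) c) (opX (D (ov i)) c)"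
        using True e1 by (simp add: bterm_def src_col_def)
      also have "\<dots> = phi (D (i - 1)) (D (ov i)) + phi (opX (D (i - 1)) (D (ov i))) c - phi (D (i - 1)) c"
        by (rule cy)
      also have "\<dots> = phi (D (i - 1)) (D (ov i)) + phi (D i) c - phi (D (i - 1)) c"
        by (simp only: eq[symmetric])
      finally show ?thesis using True by (simp add: bterm_def src_col_def)
    next
      case False
      then have eq: "D (i - 1) = opX (D i) (D (ov i))" using col_eq[OF D i] by simp
      have "bterm phi ov sg (shift opX m c D) i = - phi (opX (D i) c) (opX (D (ov i)) c)"
        using False e1 by (simp add: bterm_def src_col_def)
      also have "\<dots> = - (phi (D i) (D (ov i)) + phi (opX (D i) (D (ov i))) c - phi (D i) c)"
        by (simp only: cy)
      also have "\<dots> = - (phi (D i) (D (ov i)) + phi (D (i - 1)) c - phi (D i) c)"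
        by (simp only: eq[symmetric])
      finally show ?thesis using False by (simp add: bterm_def src_col_def)
    qed
  qed
  have "boltzmann phi m ov sg (shift opX m c D) = (\<Sum>i\<in>{1..m}. bterm phi ov sg D i + (phi (D i) c - phi (D (i - 1)) c))"
    unfolding boltzmann_bterm using bteq by simp
  also have "\<dots> = boltzmann phi m ov sg D + (phi (D m) c - phi (D 0) c)"
    unfolding boltzmann_bterm sum.distrib telescope[of "\<lambda>i. phi (D i) c"] ..
  finally show ?thesis using Dc by simp
qed


lemma f_mono:
  fixes opX :: "'x::finite \<Rightarrow> 'x \<Rightarrow> 'x" and phi :: "'x \<Rightarrow> 'x \<Rightarrow> 'l::ab_group_add"
  assumes Qd: "quandle opX" and cc: "quandle_2cocycle opX phi" and T: "tangle_diagram m ov"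
  shows "card {D \<in> closure_colorings opX m ov sg. D 0 = y \<and> boltzmann phi m ov sg D = lam}
    \<le> card {D \<in> closure_colorings opX m ov sg. D 0 = opX y c \<and> boltzmann phi m ov sg D = lam}"
proof (rule card_inj_on_le)
  show "inj_on (shift opX m c) {D \<in> closure_colorings opX m ov sg. D 0 = y \<and> boltzmann phi m ov sg D = lam}"
    by (rule inj_on_subset[OF shift_inj[OF Qd]]) (auto simp: closure_colorings_def)
  show "finite {D \<in> closure_colorings opX m ov sg. D 0 = opX y c \<and> boltzmann phi m ov sg D = lam}"
    by (rule finite_subset[OF _ finite_colorings[of opX m ov sg]]) (auto simp: closure_colorings_def)
  show "shift opX m c ` {D \<in> closure_colorings opX m ov sg. D 0 = y \<and> boltzmann phi m ov sg D = lam}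
    \<subseteq> {D \<in> closure_colorings opX m ov sg. D 0 = opX y c \<and> boltzmann phi m ov sg D = lam}"
  proof
    fix E assume "E \<in> shift opX m c ` {D \<in> closure_colorings opX m ov sg. D 0 = y \<and> boltzmann phi m ov sg D = lam}"
    then obtain D where D: "D \<in> colorings opX m ov sg" "D 0 = D m" "D 0 = y" "boltzmann phi m ov sg D = lam"
      and E: "E = shift opX m c D" by (auto simp: closure_colorings_def)
    have "E \<in> colorings opX m ov sg" using shift_col[OF Qd T D(1)] E by simp
    moreover have "E 0 = E m" "E 0 = opX y c" using D E by (auto simp: shift_def)
    moreover have "boltzmann phi m ov sg E = lam" using shift_boltz[OF Qd cc T D(1) D(2)] D E by simp
    ultimately show "E \<in> {D \<in> closure_colorings opX m ov sg. D 0 = opX y c \<and> boltzmann phi m ov sg D = lam}"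
      by (simp add: closure_colorings_def)
  qed
qed

lemma f_eq:
  fixes opX :: "'x::finite \<Rightarrow> 'x \<Rightarrow> 'x" and phi :: "'x \<Rightarrow> 'x \<Rightarrow> 'l::ab_group_add"
  assumes Qd: "quandle opX" and cc: "quandle_2cocycle opX phi" and T: "tangle_diagram m ov"
  shows "card {D \<in> closure_colorings opX m ov sg. D 0 = y \<and> boltzmann phi m ov sg D = lam}
    = card {D \<in> closure_colorings opX m ov sg. D 0 = opX y c \<and> boltzmann phi m ov sg D = lam}"
proof -
  define g where "g y = card {D \<in> closure_colorings opX m ov sg. D 0 = y \<and> boltzmann phi m ov sg D = lam}" for y
  define R where "R y = opX y c" for y
  have inj: "inj R"
  proof
    fix a b assume "R a = R b"
    moreover have "\<exists>!w. opX w c = opX a c" by (rule quandle_div[OF Qd])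
    ultimately show "a = b" unfolding R_def by (metis (no_types))
  qed
  have surj: "R ` UNIV = UNIV"
  proof -
    have "\<And>z. \<exists>w. R w = z" unfolding R_def using quandle_div[OF Qd] by (metis (no_types))
    then show ?thesis by (metis surj_def)
  qed
  have "sum g UNIV = sum g (R ` UNIV)" using surj by simp
  also have "\<dots> = sum (g \<circ> R) UNIV" by (rule sum.reindex[OF inj])
  finally have eq: "sum g UNIV = sum (g \<circ> R) UNIV" .
  have le: "\<And>y. y \<in> UNIV \<Longrightarrow> g y \<le> (g \<circ> R) y"
    unfolding g_def R_def o_def by (rule f_mono[OF Qd cc T])
  have "g y = (g \<circ> R) y" by (rule sum_mono_inv[OF eq le]) auto
  then show ?thesis unfolding g_def R_def by simp
qed

lemma f_const:
  fixes opX :: "'x::finite \<Rightarrow> 'x \<Rightarrow> 'x" and phi :: "'x \<Rightarrow> 'x \<Rightarrow> 'l::ab_group_add"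
  assumes Qd: "quandle opX" and cc: "quandle_2cocycle opX phi" and T: "tangle_diagram m ov"
    and conn: "quandle_connected (ext_op opX phi)"
  shows "card {D \<in> closure_colorings opX m ov sg. D 0 = y \<and> boltzmann phi m ov sg D = lam}
    = card {D \<in> closure_colorings opX m ov sg. D 0 = x \<and> boltzmann phi m ov sg D = lam}"
proof -
  define g where "g y = card {D \<in> closure_colorings opX m ov sg. D 0 = y \<and> boltzmann phi m ov sg D = lam}" for y
  have st: "((0::'l, x), (0, y)) \<in> (inner_step (ext_op opX phi))\<^sup>*"
    using conn unfolding quandle_connected_def by blast
  have "g x = g (snd q)" if "((0::'l, x), q) \<in> (inner_step (ext_op opX phi))\<^sup>*" for q
    using that
  proof (induction rule: rtrancl_induct)
    case base then show ?case by simp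
  next
    case (step b d)
    from step(2) have "(\<exists>a. d = ext_op opX phi b a) \<or> (\<exists>a. b = ext_op opX phi d a)"
      unfolding inner_step_def by blast
    then have "g (snd b) = g (snd d)"
    proof
      assume "\<exists>a. d = ext_op opX phi b a"
      then obtain a where "d = ext_op opX phi b a" by blast
      then have "snd d = opX (snd b) (snd a)" by (simp add: ext_op_def)
      then show ?thesis unfolding g_def using f_eq[OF Qd cc T] by simp
    next
      assume "\<exists>a. b = ext_op opX phi d a"
      then obtain a where "b = ext_op opX phi d a" by blast
      then have "snd b = opX (snd d) (snd a)" by (simp add: ext_op_def)
      then show ?thesis unfolding g_def using f_eq[OF Qd cc T] by simp
    qed
    then show ?case using step(3) by simp
  qed
  from this[OF st] show ?thesis unfolding g_def by simp
qed

lemma count_closure: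
  fixes opX :: "'x::finite \<Rightarrow> 'x \<Rightarrow> 'x" and phi :: "'x \<Rightarrow> 'x \<Rightarrow> 'l::ab_group_add"
  assumes Qd: "quandle opX" and cc: "quandle_2cocycle opX phi" and T: "tangle_diagram m ov"
    and conn: "quandle_connected (ext_op opX phi)"
  shows "card {D \<in> closure_colorings opX m ov sg. boltzmann phi m ov sg D = lam}
    = card (UNIV :: 'x set) * card {D \<in> closure_colorings opX m ov sg. D 0 = x \<and> boltzmann phi m ov sg D = lam}"
proof -
  let ?S = "{D \<in> closure_colorings opX m ov sg. boltzmann phi m ov sg D = lam}"
  have fin: "finite ?S"
    by (rule finite_subset[OF _ finite_colorings[of opX m ov sg]]) (auto simp: closure_colorings_def)
  have "card ?S = sum (\<lambda>_. 1) ?S" by simp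
  also have "\<dots> = (\<Sum>y\<in>UNIV. sum (\<lambda>_. 1) {D \<in> ?S. D 0 = y})"
    by (rule sum.group[symmetric, OF fin]) auto
  also have "\<dots> = (\<Sum>y\<in>(UNIV::'x set). card {D \<in> closure_colorings opX m ov sg. D 0 = y \<and> boltzmann phi m ov sg D = lam})"
    by (rule sum.cong) (auto intro: arg_cong[where f=card])
  also have "\<dots> = (\<Sum>y\<in>(UNIV::'x set). card {D \<in> closure_colorings opX m ov sg. D 0 = x \<and> boltzmann phi m ov sg D = lam})"
    by (rule sum.cong[OF refl], rule f_const[OF Qd cc T conn])
  finally show ?thesis by simp
qed

lemma count_lift:
  fixes opX :: "'x::finite \<Rightarrow> 'x \<Rightarrow> 'x" and phi :: "'x \<Rightarrow> 'x \<Rightarrow> 'l::ab_group_add"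
  assumes T: "tangle_diagram m ov"
  shows "card {C \<in> col_e (ext_op opX phi) m ov sg (0, x). C m = (lam, x)}
    = card {D \<in> closure_colorings opX m ov sg. D 0 = x \<and> boltzmann phi m ov sg D = lam}"
proof -
  let ?A = "{C \<in> col_e (ext_op opX phi) m ov sg (0, x). C m = (lam, x)}"
  let ?B = "{D \<in> closure_colorings opX m ov sg. D 0 = x \<and> boltzmann phi m ov sg D = lam}"
  have "?A = lift phi m ov sg ` ?B"
  proof
    show "?A \<subseteq> lift phi m ov sg ` ?B"
    proof
      fix C assume C: "C \<in> ?A"
      then have Cc: "C \<in> colorings (ext_op opX phi) m ov sg" and C0: "C 0 = (0, x)" and Cm: "C m = (lam, x)"
        by (auto simp: col_e_def)
      define D where "D = (\<lambda>j\<in>{0..m}. snd (C j))"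
      have CL: "C = lift phi m ov sg D" unfolding D_def by (rule lift_inv[OF T Cc]) (simp add: C0)
      have Dc: "D \<in> colorings opX m ov sg" unfolding D_def by (rule proj_col[OF T Cc])
      have "D 0 = x" "D m = x" using C0 Cm by (auto simp: D_def)
      moreover have "boltzmann phi m ov sg D = lam"
      proof -
        have "lift phi m ov sg D m = (lam, x)" using Cm CL by simp
        then show ?thesis unfolding lift_def boltzmann_bterm by simp
      qed
      ultimately have "D \<in> ?B" using Dc by (simp add: closure_colorings_def)
      then show "C \<in> lift phi m ov sg ` ?B" using CL by blast
    qed
    show "lift phi m ov sg ` ?B \<subseteq> ?A"
    proof
      fix C assume "C \<in> lift phi m ov sg ` ?B"
      then obtain D where D: "D \<in> colorings opX m ov sg" "D 0 = x" "D m = x" "boltzmann phi m ov sg D = lam"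
        and C: "C = lift phi m ov sg D" by (auto simp: closure_colorings_def)
      have "C \<in> colorings (ext_op opX phi) m ov sg" using lift_col[OF T D(1)] C by simp
      moreover have "C 0 = (0, x)" using C D by (simp add: lift_def)
      moreover have "C m = (lam, x)" using C D by (simp add: lift_def boltzmann_bterm)
      ultimately show "C \<in> ?A" by (simp add: col_e_def)
    qed
  qed
  moreover have "inj_on (lift phi m ov sg) ?B"
    by (rule inj_on_subset[OF lift_inj]) (auto simp: closure_colorings_def)
  ultimately show ?thesis by (simp add: card_image)
qed

theorem mainTheorem4:
  fixes opX :: "'x::finite \<Rightarrow> 'x \<Rightarrow> 'x"
    and phi :: "'x \<Rightarrow> 'x \<Rightarrow> 'l::{ab_group_add, finite}"
    and m :: nat and ov :: "nat \<Rightarrow> nat" and sg :: "nat \<Rightarrow> bool"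
    and x :: 'x
  assumes "quandle opX"
    and "quandle_2cocycle opX phi"
    and "quandle_connected (ext_op opX phi)"
    and "tangle_diagram m ov"
  defines "Q \<equiv> ext_op opX phi"
    and "e \<equiv> (0, x)"
    and "C0 \<equiv> {C \<in> col_e (ext_op opX phi) m ov sg (0, x). snd (C m) = x}"
    and "C1 \<equiv> col_e (ext_op opX phi) m ov sg (0, x)
                - {C \<in> col_e (ext_op opX phi) m ov sg (0, x). snd (C m) = x}"
  shows "(\<lambda>q. (of_int (Psi Q m ov sg e q) :: rat)) =
    (\<lambda>q. (1 / of_nat (card (UNIV :: 'x set))) *
            of_int (if snd q = x then cocycle_invariant opX phi m ov sg (fst q) else 0)
          + of_int (formal_sum C1 (\<lambda>C. C m) q))"
proof
  fix q :: "'l \<times> 'x"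
  obtain lam y where q: "q = (lam, y)" by (cases q)
  have N: "card (UNIV :: 'x set) > 0" by (simp add: card_gt_0_iff)
  show "(of_int (Psi Q m ov sg e q) :: rat) = (1 / of_nat (card (UNIV :: 'x set))) *
            of_int (if snd q = x then cocycle_invariant opX phi m ov sg (fst q) else 0)
          + of_int (formal_sum C1 (\<lambda>C. C m) q)"
  proof (cases "y = x")
    case True
    have e1: "Psi Q m ov sg e q = int (card {D \<in> closure_colorings opX m ov sg. D 0 = x \<and> boltzmann phi m ov sg D = lam})"
      unfolding Psi_def formal_sum_def Q_def e_def q True
      using count_lift[OF assms(4), of opX phi sg x lam] by simp
    have e2: "formal_sum C1 (\<lambda>C. C m) q = 0"
    proof -
      have E: "{c \<in> C1. c m = q} = {}" unfolding C1_def q True by auto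
      show ?thesis unfolding formal_sum_def E by simp
    qed
    have e3: "cocycle_invariant opX phi m ov sg lam = int (card (UNIV :: 'x set)) *
       int (card {D \<in> closure_colorings opX m ov sg. D 0 = x \<and> boltzmann phi m ov sg D = lam})"
      unfolding cocycle_invariant_def formal_sum_def
      using count_closure[OF assms(1,2,4,3), of sg lam x] by simp
    show ?thesis using N unfolding e1 e2 using e3 q True by simp
  next
    case False
    have "{c \<in> col_e (ext_op opX phi) m ov sg (0, x). c m = q} = {c \<in> C1. c m = q}"
      unfolding C1_def using False q by auto
    then have "Psi Q m ov sg e q = formal_sum C1 (\<lambda>C. C m) q"
      unfolding Psi_def formal_sum_def Q_def e_def by simp
    then show ?thesis using False q by simp
  qed
qed

end
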